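(* For even $n\ge4$, let $\bar P_n$ denote the maximum of $\bar P(\mathsf{M}^{(1)},\mathsf{M}^{(2)})$ over all pairs of dichotomic measurements on the regular $n$-gon state space $\mathcal{S}_n$. Then, for every integer $m\ge1$: (i) if $n=4m$ with $m$ odd, $\bar P_n=\frac12\big(1+\frac{\sec(\pi/n)}{\sqrt2}\big)$; (ii) if $n=4m$ with $m$ even, $\bar P_n=\frac12\big(1+\frac{1}{\sqrt2}\big)$; (iii) if $n=4m+2$ with $m$ odd, $\bar P_n=\frac14\big[2+\sec(\pi/n)\cos(m\pi/n)+\sin(m\pi/n)\big]$; (iv) if $n=4m+2$ with $m$ even, $\bar P_n=\frac14\big[2+\cos(m\pi/n)+\sec(\pi/n)\sin(m\pi/n)\big]$.
   Context: The regular $n$-gon state space $\mathcal{S}_n\subset\mathbb{R}^3$ is the convex hull of $s_j=(r_n\cos(2j\pi/n),\,r_n\sin(2j\pi/n),\,1)^T$, $j=1,\ldots,n$, with $r_n=\sqrt{\sec(\pi/n)}$. Effects are linear functionals $e$ on $\mathbb{R}^3$ with $0\le e\le1$ on $\mathcal{S}_n$; unit effect $u=(0,0,1)$; $\|f\|=\max_{s\in\mathcal{S}_n}|f(s)|$. A dichotomic measurement is a pair of effects $\mathsf{M}_+,\mathsf{M}_-$ with $\mathsf{M}_++\mathsf{M}_-=u$, and $\bar P(\mathsf{M}^{(1)},\mathsf{M}^{(2)})=\frac18\sum_{x,y\in\{+,-\}}\|\mathsf{M}^{(1)}_x+\mathsf{M}^{(2)}_y\|$. *)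

theory Defs
  imports "HOL-Analysis.Analysis"
begin

definition sec :: "real \<Rightarrow> real" where
  "sec x = 1 / cos x"

definition r_ngon :: "nat \<Rightarrow> real" where
  "r_ngon n = sqrt (sec (pi / real n))"

definition vert :: "nat \<Rightarrow> nat \<Rightarrow> real^3" where
  "vert n j = vector [r_ngon n * cos (2 * real j * pi / real n),
                      r_ngon n * sin (2 * real j * pi / real n), 1]"

definition state_space :: "nat \<Rightarrow> (real^3) set" where
  "state_space n = convex hull (vert n ` {1..n})"

(* linear functionals on R^3 are represented by vectors f, acting as s \<mapsto> f \<bullet> s *)
definition unit_eff :: "real^3" where
  "unit_eff = vector [0, 0, 1]"

definition is_effect :: "nat \<Rightarrow> real^3 \<Rightarrow> bool" where
  "is_effect n e \<longleftrightarrow> (\<forall>s\<in>state_space n. 0 \<le> e \<bullet> s \<and> e \<bullet> s \<le> 1)"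

definition fnorm :: "nat \<Rightarrow> real^3 \<Rightarrow> real" where
  "fnorm n f = Sup ((\<lambda>s. \<bar>f \<bullet> s\<bar>) ` state_space n)"

definition is_dich_meas :: "nat \<Rightarrow> (real^3) \<times> (real^3) \<Rightarrow> bool" where
  "is_dich_meas n M \<longleftrightarrow> is_effect n (fst M) \<and> is_effect n (snd M) \<and> fst M + snd M = unit_eff"

definition Pbar :: "nat \<Rightarrow> (real^3) \<times> (real^3) \<Rightarrow> (real^3) \<times> (real^3) \<Rightarrow> real" where
  "Pbar n M1 M2 = (1/8) * (fnorm n (fst M1 + fst M2) + fnorm n (fst M1 + snd M2)
                          + fnorm n (snd M1 + fst M2) + fnorm n (snd M1 + snd M2))"

definition Pbar_vals :: "nat \<Rightarrow> real set" where
  "Pbar_vals n = {Pbar n M1 M2 | M1 M2. is_dich_meas n M1 \<and> is_dich_meas n M2}"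

definition Pbar_max :: "nat \<Rightarrow> real" where
  "Pbar_max n = (GREATEST v. v \<in> Pbar_vals n)"

end

theory Submission
  imports Defs
begin

lemma vert_inner:
  "g \<bullet> vert n k = g$3 + (r_ngon n * g$1) * cos (2*real k*pi/real n)
     + (r_ngon n * g$2) * sin (2*real k*pi/real n)"
  by (simp add: vert_def inner_vec_def sum_3 algebra_simps)

lemma unit_inner: "unit_eff \<bullet> vert n k = 1"
  by (simp add: vert_def unit_eff_def inner_vec_def sum_3)

lemma vert_mod:
  assumes "n > 0" shows "vert n k = vert n (k mod n)"
proof -
  have k: "k = k mod n + n * (k div n)" by simp
  have rk: "real k = real (k mod n) + real n * real (k div n)"
    by (metis k of_nat_add of_nat_mult)
  have "2*real k*pi/real n = 2*real (k mod n)*pi/real n + (2*pi) * real (k div n)"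
    using assms by (simp add: rk field_simps)
  moreover have "cos ((2*pi) * real (k div n)) = 1" "sin ((2*pi) * real (k div n)) = 0"
    using cos_int_2pin[of "int (k div n)"] sin_int_2pin[of "int (k div n)"] by simp_all
  ultimately show ?thesis unfolding vert_def by (simp add: cos_add sin_add)
qed

lemma vert_in:
  assumes "n > 0" shows "vert n k \<in> state_space n"
proof -
  have "vert n k \<in> vert n ` {1..n}"
  proof (cases "k mod n = 0")
    case True
    then have "vert n k = vert n n" using vert_mod[OF assms, of k] vert_mod[OF assms, of n] by simp
    then show ?thesis using assms by auto
  next
    case False
    then have "k mod n \<in> {1..n}" using assms by (simp add: Suc_leI less_imp_le)
    then show ?thesis using vert_mod[OF assms, of k] by auto
  qed
  then show ?thesis unfolding state_space_def by (rule hull_inc)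
qed

lemma hull_max:
  assumes "n > 0" shows "\<exists>k\<in>{1..n}. \<forall>s\<in>state_space n. g \<bullet> s \<le> g \<bullet> vert n k"
proof -
  let ?V = "vert n ` {1..n}"
  let ?M = "Max ((\<lambda>v. g \<bullet> v) ` ?V)"
  have fin: "finite ((\<lambda>v. g \<bullet> v) ` ?V)" by simp
  have ne: "(\<lambda>v. g \<bullet> v) ` ?V \<noteq> {}" using assms by auto
  obtain v where v: "v \<in> ?V" "g \<bullet> v = ?M" using Max_in[OF fin ne] by (metis (no_types, lifting) imageE)
  then obtain k where k: "k \<in> {1..n}" "v = vert n k" by auto
  have "?V \<subseteq> {x. g \<bullet> x \<le> ?M}" using fin by auto
  then have "state_space n \<subseteq> {x. g \<bullet> x \<le> ?M}"
    unfolding state_space_def by (rule hull_minimal) (rule convex_halfspace_le)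
  then have "\<forall>s\<in>state_space n. g \<bullet> s \<le> g \<bullet> vert n k" using k v by auto
  then show ?thesis using k(1) by blast
qed

lemma effect_of_verts:
  assumes "\<And>k. k \<in> {1..n} \<Longrightarrow> 0 \<le> g \<bullet> vert n k \<and> g \<bullet> vert n k \<le> 1"
  shows "is_effect n g"
proof -
  have "vert n ` {1..n} \<subseteq> {x. 0 \<le> g \<bullet> x} \<inter> {x. g \<bullet> x \<le> 1}" using assms by auto
  then have "state_space n \<subseteq> {x. 0 \<le> g \<bullet> x} \<inter> {x. g \<bullet> x \<le> 1}"
    unfolding state_space_def
    by (rule hull_minimal) (intro convex_Int convex_halfspace_le convex_halfspace_ge)
  then show ?thesis unfolding is_effect_def by auto
qed

lemma fnorm_ge:
  assumes "n > 0" "v \<in> state_space n" shows "\<bar>g \<bullet> v\<bar> \<le> fnorm n g"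
proof -
  have "compact (state_space n)" unfolding state_space_def
    by (intro compact_convex_hull finite_imp_compact) simp
  then have "compact ((\<lambda>s. \<bar>g \<bullet> s\<bar>) ` state_space n)"
    by (intro compact_continuous_image continuous_intros)
  then have "bdd_above ((\<lambda>s. \<bar>g \<bullet> s\<bar>) ` state_space n)"
    by (intro bounded_imp_bdd_above compact_imp_bounded)
  then show ?thesis unfolding fnorm_def using assms(2) by (intro cSup_upper) auto
qed

lemma fnorm_le:
  assumes "n > 0" "\<And>s. s \<in> state_space n \<Longrightarrow> \<bar>g \<bullet> s\<bar> \<le> B" shows "fnorm n g \<le> B"
  unfolding fnorm_def using assms vert_in[OF assms(1), of 0] by (intro cSup_least) auto

lemma fnorm_sum_le:
  assumes "n > 0" "is_effect n a" "is_effect n b"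
  shows "\<exists>k\<in>{1..n}. fnorm n (a+b) \<le> (a+b) \<bullet> vert n k"
proof -
  obtain k where k: "k \<in> {1..n}" "\<forall>s\<in>state_space n. (a+b) \<bullet> s \<le> (a+b) \<bullet> vert n k"
    using hull_max[OF assms(1)] by blast
  have "fnorm n (a+b) \<le> (a+b) \<bullet> vert n k"
  proof (rule fnorm_le[OF assms(1)])
    fix s assume s: "s \<in> state_space n"
    have "0 \<le> (a+b) \<bullet> s" using assms(2,3) s unfolding is_effect_def by (simp add: inner_add_left)
    then show "\<bar>(a+b) \<bullet> s\<bar> \<le> (a+b) \<bullet> vert n k" using k s by simp
  qed
  then show ?thesis using k by blast
qed

lemma ang_le:
  assumes "0 < n" "0 < c" "c * real k \<le> real n"
  shows "real k * pi / real n \<le> pi / c"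
proof -
  have "c * real k * pi \<le> real n * pi" using assms(3) by (rule mult_right_mono) simp
  then show ?thesis using assms(1,2) by (simp add: field_simps)
qed

lemma ang_less:
  assumes "0 < n" "real_of_int k < real n"
  shows "of_int k * pi / real n < pi"
proof -
  have "of_int k * pi < real n * pi" using assms(2) by (rule mult_strict_right_mono) simp
  then show ?thesis using assms(1) by (simp add: field_simps)
qed

definition lam :: "real \<Rightarrow> real \<Rightarrow> real \<Rightarrow> real" where
  "lam A B x = A * cos x + B * sin x"

lemma lam_sum: "lam A B (x+y) + lam A B (x-y) = 2 * cos y * lam A B x"
  by (simp add: lam_def cos_add cos_diff sin_add sin_diff algebra_simps)

lemma lam_diff: "lam A B (x+y) - lam A B (x-y) = 2 * sin y * lam A B (x + pi/2)"
  by (simp add: lam_def cos_add cos_diff sin_add sin_diff algebra_simps)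

lemma abs_cos_int_pi: "\<bar>cos (x + of_int k * pi)\<bar> = \<bar>cos x\<bar>" and abs_sin_int_pi: "\<bar>sin (x + of_int k * pi)\<bar> = \<bar>sin x\<bar>"
proof -
  have s: "sin (of_int k * pi) = 0" by (simp add: sin_times_pi_eq_0)
  then have "(cos (of_int k * pi))^2 = 1" using sin_cos_squared_add[of "of_int k * pi"] by simp
  then have c: "\<bar>cos (of_int k * pi)\<bar> = 1" by (metis abs_power2 abs_ge_zero power2_eq_1_iff abs_1 abs_minus_cancel)
  show "\<bar>cos (x + of_int k * pi)\<bar> = \<bar>cos x\<bar>" by (simp add: cos_add s abs_mult c)
  show "\<bar>sin (x + of_int k * pi)\<bar> = \<bar>sin x\<bar>" by (simp add: sin_add s abs_mult c)
qed

lemma red: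
  assumes n: "n = 2*p" and p: "p > 0"
  shows "\<exists>d'::nat. d' \<le> p \<and> (even d' \<longleftrightarrow> even d) \<and>
     \<bar>cos (of_int d * pi / real n)\<bar> = cos (real d' * pi / real n) \<and>
     \<bar>sin (of_int d * pi / real n)\<bar> = sin (real d' * pi / real n)"
proof -
  define t where "t = d mod int n"
  define k where "k = d div int n"
  have dt: "d = t + int n * k" unfolding t_def k_def by simp
  have t0: "0 \<le> t" "t < int n" unfolding t_def using p n by simp_all
  define t' where "t' = nat t"
  have tt: "t = int t'" "t' < n" using t0 unfolding t'_def by auto
  have ang: "of_int d * pi / real n = real t' * pi / real n + of_int k * pi"
    using p n by (simp add: dt tt field_simps)
  have par: "even d \<longleftrightarrow> even t'" using n by (simp add: dt tt)
  have ac: "\<bar>cos (of_int d * pi / real n)\<bar> = \<bar>cos (real t' * pi / real n)\<bar>"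
    and as: "\<bar>sin (of_int d * pi / real n)\<bar> = \<bar>sin (real t' * pi / real n)\<bar>"
    by (simp_all only: ang abs_cos_int_pi abs_sin_int_pi)
  show ?thesis
  proof (cases "t' \<le> p")
    case True
    have "real t' * pi / real n \<le> pi / 2" using True n p by (simp add: field_simps)
    moreover have "0 \<le> real t' * pi / real n" by simp
    ultimately have "0 \<le> cos (real t' * pi / real n)" "0 \<le> sin (real t' * pi / real n)"
      using pi_gt_zero cos_ge_zero[of "real t' * pi / real n"] sin_ge_zero[of "real t' * pi / real n"] by linarith+
    then show ?thesis using True par ac as by (intro exI[of _ t']) simp
  next
    case False
    define d' where "d' = n - t'"
    have d'p: "d' \<le> p" using False n unfolding d'_def by simp
    have e: "real t' * pi / real n = pi - real d' * pi / real n"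
      using tt n p unfolding d'_def by (simp add: field_simps of_nat_diff)
    have "real d' * pi / real n \<le> pi / 2" using d'p n p by (simp add: field_simps)
    moreover have "0 \<le> real d' * pi / real n" by simp
    ultimately have "0 \<le> cos (real d' * pi / real n)" "0 \<le> sin (real d' * pi / real n)"
      using pi_gt_zero cos_ge_zero[of "real d' * pi / real n"] sin_ge_zero[of "real d' * pi / real n"] by linarith+
    moreover have "even d' \<longleftrightarrow> even t'" using n tt unfolding d'_def by auto
    ultimately show ?thesis using d'p par ac as e by (intro exI[of _ d']) simp
  qed
qed

definition leff :: "nat \<Rightarrow> real^3 \<Rightarrow> real \<Rightarrow> real" where
  "leff n g = lam (r_ngon n * g$1) (r_ngon n * g$2)"

definition beta :: "nat \<Rightarrow> nat \<Rightarrow> real" where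
  "beta n j = (if even j then 1 else 1 / cos (pi / real n))"

lemma vert_inner':
  "g \<bullet> vert n k = g$3 + leff n g (real (2*k) * pi / real n)"
  unfolding vert_inner leff_def lam_def by (simp add: mult.assoc)

lemma cos_pin_pos: assumes "n \<ge> 4" shows "0 < cos (pi / real n)"
proof (rule cos_gt_zero_pi)
  have "pi / real n \<le> pi / 4" using assms by (intro divide_left_mono) auto
  then show "pi / real n < pi / 2" using pi_gt_zero by linarith
  have "0 < pi / real n" using assms by simp
  then show "-(pi/2) < pi / real n" using pi_gt_zero by linarith
qed

lemma beta_nonneg: "n \<ge> 4 \<Longrightarrow> 0 \<le> beta n j"
  using cos_pin_pos[of n] by (simp add: beta_def)

lemma leff_shift:
  assumes "n = 2*p" "p > 0"
  shows "leff n g (real (2*(k+p)) * pi / real n) = - leff n g (real (2*k) * pi / real n)"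
proof -
  have "real (2*(k+p)) * pi / real n = real (2*k) * pi / real n + pi"
    using assms by (simp add: field_simps)
  then show ?thesis unfolding leff_def lam_def by (simp add: cos_add sin_add)
qed

lemma leff_even:
  assumes "n = 2*p" "p > 0" "is_effect n e"
  shows "\<bar>leff n e (real (2*k) * pi / real n)\<bar> \<le> 1/2"
proof -
  have n0: "n > 0" using assms by simp
  have "0 \<le> e \<bullet> vert n k" "e \<bullet> vert n k \<le> 1" "0 \<le> e \<bullet> vert n (k+p)" "e \<bullet> vert n (k+p) \<le> 1"
    using assms(3) vert_in[OF n0] unfolding is_effect_def by auto
  then show ?thesis unfolding vert_inner' leff_shift[OF assms(1,2)] by linarith
qed

lemma leff_bound:
  assumes "n = 2*p" "p \<ge> 2" "is_effect n e"
  shows "\<bar>leff n e (real j * pi / real n)\<bar> \<le> beta n j / 2"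
proof (cases "even j")
  case True
  then obtain k where "j = 2*k" by blast
  then show ?thesis using leff_even[OF assms(1) _ assms(3), of k] assms(2) True by (simp add: beta_def)
next
  case False
  then obtain k where k: "j = 2*k+1" using oddE by blast
  have "n \<ge> 4" using assms by simp
  then have c: "0 < cos (pi / real n)" by (rule cos_pin_pos)
  let ?x = "real j * pi / real n" and ?y = "pi / real n"
  have "?x + ?y = real (2*(k+1)) * pi / real n" "?x - ?y = real (2*k) * pi / real n"
    using k by (simp_all add: add_divide_distrib[symmetric] diff_divide_distrib[symmetric] algebra_simps)
  then have "2 * cos ?y * leff n e ?x = leff n e (real (2*(k+1)) * pi / real n) + leff n e (real (2*k) * pi / real n)"
    unfolding leff_def using lam_sum[of _ _ ?x ?y] by simp
  then have "\<bar>2 * cos ?y * leff n e ?x\<bar> \<le> 1"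
    using leff_even[OF assms(1) _ assms(3), of "k+1"] leff_even[OF assms(1) _ assms(3), of k] assms(2)
    by simp
  then have "2 * cos ?y * \<bar>leff n e ?x\<bar> \<le> 1" using c by (simp add: abs_mult)
  then have "\<bar>leff n e ?x\<bar> \<le> 1 / (2 * cos ?y)" using c by (simp add: field_simps)
  then show ?thesis using False by (simp add: beta_def)
qed

lemma phi_bound:
  assumes "n = 2*p" "p \<ge> 2" "is_effect n e" "is_effect n f"
  shows "leff n e (real (2*a) * pi / real n) + leff n e (real (2*b) * pi / real n)
       + leff n f (real (2*a) * pi / real n) - leff n f (real (2*b) * pi / real n)
     \<le> \<bar>cos (of_int (int a - int b) * pi / real n)\<bar> * beta n (a+b)
       + \<bar>sin (of_int (int a - int b) * pi / real n)\<bar> * beta n (a+b+p)"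
proof -
  let ?x = "real (a+b) * pi / real n" and ?y = "of_int (int a - int b) * pi / real n"
  have n0: "n > 0" using assms by simp
  have xy: "?x + ?y = real (2*a) * pi / real n" "?x - ?y = real (2*b) * pi / real n"
    using n0 by (simp_all add: field_simps)
  have xp: "?x + pi/2 = real (a+b+p) * pi / real n" using assms(1) n0 by (simp add: field_simps)
  have 1: "leff n e (real (2*a) * pi / real n) + leff n e (real (2*b) * pi / real n) = 2 * cos ?y * leff n e ?x"
    unfolding leff_def using lam_sum[of _ _ ?x ?y, unfolded xy] by simp
  have 2: "leff n f (real (2*a) * pi / real n) - leff n f (real (2*b) * pi / real n) = 2 * sin ?y * leff n f (real (a+b+p) * pi / real n)"
    unfolding leff_def using lam_diff[of _ _ ?x ?y, unfolded xy xp] by simp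
  have b1: "\<bar>leff n e ?x\<bar> \<le> beta n (a+b) / 2" by (rule leff_bound[OF assms(1,2,3)])
  have b2: "\<bar>leff n f (real (a+b+p) * pi / real n)\<bar> \<le> beta n (a+b+p) / 2" by (rule leff_bound[OF assms(1,2,4)])
  have "2 * cos ?y * leff n e ?x \<le> \<bar>cos ?y\<bar> * beta n (a+b)"
  proof -
    have "2 * cos ?y * leff n e ?x \<le> \<bar>2 * cos ?y * leff n e ?x\<bar>" by (rule abs_ge_self)
    also have "\<dots> = 2 * \<bar>cos ?y\<bar> * \<bar>leff n e ?x\<bar>" by (simp add: abs_mult)
    also have "\<dots> \<le> \<bar>cos ?y\<bar> * beta n (a+b)" using b1 mult_left_mono[OF b1, of "2*\<bar>cos ?y\<bar>"] by simp
    finally show ?thesis .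
  qed
  moreover have "2 * sin ?y * leff n f (real (a+b+p) * pi / real n) \<le> \<bar>sin ?y\<bar> * beta n (a+b+p)"
  proof -
    have "2 * sin ?y * leff n f (real (a+b+p) * pi / real n) \<le> \<bar>2 * sin ?y * leff n f (real (a+b+p) * pi / real n)\<bar>" by (rule abs_ge_self)
    also have "\<dots> = 2 * \<bar>sin ?y\<bar> * \<bar>leff n f (real (a+b+p) * pi / real n)\<bar>" by (simp add: abs_mult)
    also have "\<dots> \<le> \<bar>sin ?y\<bar> * beta n (a+b+p)" using mult_left_mono[OF b2, of "2*\<bar>sin ?y\<bar>"] by simp
    finally show ?thesis .
  qed
  ultimately show ?thesis using 1 2 by linarith
qed

definition Phi :: "nat \<Rightarrow> real^3 \<Rightarrow> real^3 \<Rightarrow> nat \<Rightarrow> nat \<Rightarrow> real" where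
  "Phi n e f a b = leff n e (real (2*a) * pi / real n) + leff n e (real (2*b) * pi / real n)
       + leff n f (real (2*a) * pi / real n) - leff n f (real (2*b) * pi / real n)"

definition HK :: "nat \<Rightarrow> nat \<Rightarrow> real \<Rightarrow> bool" where
  "HK n p K \<longleftrightarrow> (\<forall>d \<sigma>. d \<le> p \<longrightarrow> (even \<sigma> \<longleftrightarrow> even d) \<longrightarrow>
      cos (real d * pi / real n) * beta n \<sigma> + sin (real d * pi / real n) * beta n (\<sigma>+p) \<le> K)"

lemma Phi_le:
  assumes "n = 2*p" "p \<ge> 2" "is_effect n e" "is_effect n f" "HK n p K"
  shows "Phi n e f a b \<le> K"
proof -
  obtain d' where d': "d' \<le> p" "even d' \<longleftrightarrow> even (int a - int b)"
     "\<bar>cos (of_int (int a - int b) * pi / real n)\<bar> = cos (real d' * pi / real n)"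
     "\<bar>sin (of_int (int a - int b) * pi / real n)\<bar> = sin (real d' * pi / real n)"
    using red[OF assms(1), of "int a - int b"] assms(2) by auto
  have par: "even (a+b) \<longleftrightarrow> even d'" using d'(2) by (simp add: even_add)
  have "Phi n e f a b \<le> \<bar>cos (of_int (int a - int b) * pi / real n)\<bar> * beta n (a+b)
       + \<bar>sin (of_int (int a - int b) * pi / real n)\<bar> * beta n (a+b+p)"
    unfolding Phi_def by (rule phi_bound[OF assms(1-4)])
  also have "\<dots> \<le> K" using assms(5) d' par unfolding HK_def by auto
  finally show ?thesis .
qed

lemma dich_snd: "is_dich_meas n M \<Longrightarrow> snd M = unit_eff - fst M"
  unfolding is_dich_meas_def by (auto simp: algebra_simps)

lemma Pbar_upper:
  assumes "n = 2*p" "p \<ge> 2" "is_dich_meas n M1" "is_dich_meas n M2" "HK n p K"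
  shows "Pbar n M1 M2 \<le> 1/2 + K/4"
proof -
  have n0: "n > 0" using assms by simp
  define e where "e = fst M1"
  define f where "f = fst M2"
  have s1: "snd M1 = unit_eff - e" and s2: "snd M2 = unit_eff - f"
    using dich_snd assms(3,4) e_def f_def by auto
  have ee: "is_effect n e" "is_effect n (unit_eff - e)" "is_effect n f" "is_effect n (unit_eff - f)"
    using assms(3,4) s1 s2 unfolding is_dich_meas_def e_def f_def by auto
  obtain k1 where k1: "fnorm n (e+f) \<le> (e+f) \<bullet> vert n k1" using fnorm_sum_le[OF n0 ee(1) ee(3)] by blast
  obtain k2 where k2: "fnorm n (e+(unit_eff - f)) \<le> (e+(unit_eff - f)) \<bullet> vert n k2" using fnorm_sum_le[OF n0 ee(1) ee(4)] by blast
  obtain k3 where k3: "fnorm n ((unit_eff - e)+f) \<le> ((unit_eff - e)+f) \<bullet> vert n k3" using fnorm_sum_le[OF n0 ee(2) ee(3)] by blast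
  obtain k4 where k4: "fnorm n ((unit_eff - e)+(unit_eff - f)) \<le> ((unit_eff - e)+(unit_eff - f)) \<bullet> vert n k4" using fnorm_sum_le[OF n0 ee(2) ee(4)] by blast
  have pp: "p > 0" using assms by simp
  have sh: "\<And>g k. g \<bullet> vert n k = g$3 - leff n g (real (2*(k+p)) * pi / real n)"
    using leff_shift[OF assms(1) pp] vert_inner' by simp
  have "8 * Pbar n M1 M2 \<le> (e+f) \<bullet> vert n k1 + (e+(unit_eff - f)) \<bullet> vert n k2
      + ((unit_eff - e)+f) \<bullet> vert n k3 + ((unit_eff - e)+(unit_eff - f)) \<bullet> vert n k4"
    unfolding Pbar_def s1 s2 e_def[symmetric] f_def[symmetric] using k1 k2 k3 k4 by simp
  also have "\<dots> = 4 + Phi n e f k1 k2 + Phi n e f (k4+p) (k3+p)"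
    unfolding Phi_def inner_add_left inner_diff_left unit_inner
      vert_inner'[of e n k1] vert_inner'[of f n k1] vert_inner'[of e n k2] vert_inner'[of f n k2]
      sh[of e k3] sh[of f k3] sh[of e k4] sh[of f k4]
    by (simp add: algebra_simps)
  also have "\<dots> \<le> 4 + K + K" using Phi_le[OF assms(1,2) ee(1,3) assms(5)] by (meson add_mono order_refl)
  finally show ?thesis by simp
qed

lemma Pbar_lower:
  assumes "n = 2*p" "p \<ge> 2" "is_effect n e" "is_effect n f"
  shows "1/2 + Phi n e f i i' / 4 \<le> Pbar n (e, unit_eff - e) (f, unit_eff - f)"
proof -
  have n0: "n > 0" using assms by simp
  have pp: "p > 0" using assms by simp
  have sh: "\<And>g k. g \<bullet> vert n (k+p) = g$3 - leff n g (real (2*k) * pi / real n)"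
    using leff_shift[OF assms(1) pp] vert_inner' by simp
  have a1: "(e+f) \<bullet> vert n i \<le> fnorm n (e+f)"
    using fnorm_ge[OF n0 vert_in[OF n0], of "e+f" i] by linarith
  have a2: "(e+(unit_eff - f)) \<bullet> vert n i' \<le> fnorm n (e+(unit_eff - f))"
    using fnorm_ge[OF n0 vert_in[OF n0], of "e+(unit_eff - f)" i'] by linarith
  have a3: "((unit_eff - e)+f) \<bullet> vert n (i'+p) \<le> fnorm n ((unit_eff - e)+f)"
    using fnorm_ge[OF n0 vert_in[OF n0], of "(unit_eff - e)+f" "i'+p"] by linarith
  have a4: "((unit_eff - e)+(unit_eff - f)) \<bullet> vert n (i+p) \<le> fnorm n ((unit_eff - e)+(unit_eff - f))"
    using fnorm_ge[OF n0 vert_in[OF n0], of "(unit_eff - e)+(unit_eff - f)" "i+p"] by linarith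
  have "4 + 2 * Phi n e f i i' = (e+f) \<bullet> vert n i + (e+(unit_eff - f)) \<bullet> vert n i'
      + ((unit_eff - e)+f) \<bullet> vert n (i'+p) + ((unit_eff - e)+(unit_eff - f)) \<bullet> vert n (i+p)"
    unfolding Phi_def inner_add_left inner_diff_left unit_inner
      sh[of e i] sh[of f i] sh[of e i'] sh[of f i']
      vert_inner'[of e n i] vert_inner'[of f n i] vert_inner'[of e n i'] vert_inner'[of f n i']
    by (simp add: algebra_simps)
  also have "\<dots> \<le> 8 * Pbar n (e, unit_eff - e) (f, unit_eff - f)"
    unfolding Pbar_def using a1 a2 a3 a4 by simp
  finally show ?thesis by simp
qed

lemma Pbar_max_eq:
  assumes "n = 2*p" "p \<ge> 2" "HK n p K" "is_effect n e" "is_effect n (unit_eff - e)"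
    "is_effect n f" "is_effect n (unit_eff - f)" "Phi n e f i i' = K"
  shows "Pbar_max n = 1/2 + K/4"
  unfolding Pbar_max_def
proof (rule Greatest_equality)
  have "is_dich_meas n (e, unit_eff - e)" "is_dich_meas n (f, unit_eff - f)"
    using assms(4-7) unfolding is_dich_meas_def by auto
  moreover have "Pbar n (e, unit_eff - e) (f, unit_eff - f) = 1/2 + K/4"
    using Pbar_lower[OF assms(1,2,4,6), of i i'] Pbar_upper[OF assms(1,2) calculation assms(3)] assms(8)
    by linarith
  ultimately show "1/2 + K/4 \<in> Pbar_vals n" unfolding Pbar_vals_def by force
next
  fix y assume "y \<in> Pbar_vals n"
  then show "y \<le> 1/2 + K/4" unfolding Pbar_vals_def using Pbar_upper[OF assms(1,2) _ _ assms(3)] by auto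
qed

definition ce :: "nat \<Rightarrow> nat \<Rightarrow> real^3" where
  "ce n j = vector [beta n j / 2 * cos (real j * pi / real n) / r_ngon n,
                    beta n j / 2 * sin (real j * pi / real n) / r_ngon n, 1/2]"

lemma r_pos: "n \<ge> 4 \<Longrightarrow> r_ngon n > 0"
  unfolding r_ngon_def sec_def using cos_pin_pos[of n] by simp

lemma leff_ce:
  assumes "n \<ge> 4"
  shows "leff n (ce n j) x = beta n j / 2 * cos (x - real j * pi / real n)"
  using r_pos[OF assms] unfolding leff_def lam_def ce_def by (simp add: cos_diff algebra_simps)

lemma cos_odd_le:
  assumes "n = 2*p" "p \<ge> 2" "odd t"
  shows "\<bar>cos (of_int t * pi / real n)\<bar> \<le> cos (pi / real n)"
proof -
  obtain d' where d': "d' \<le> p" "even d' \<longleftrightarrow> even t"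
     "\<bar>cos (of_int t * pi / real n)\<bar> = cos (real d' * pi / real n)"
    using red[OF assms(1), of t] assms(2) by auto
  have "d' \<ge> 1" using d'(2) assms(3) by (cases d') auto
  have "cos (real d' * pi / real n) \<le> cos (pi / real n)"
  proof (rule cos_monotone_0_pi_le)
    show "0 \<le> pi / real n" by simp
    show "pi / real n \<le> real d' * pi / real n" using \<open>d' \<ge> 1\<close> by (simp add: divide_right_mono)
    have "real d' * pi / real n \<le> pi / 2" using d'(1) assms(1,2) by (simp add: field_simps)
    then show "real d' * pi / real n \<le> pi" using pi_gt_zero by linarith
  qed
  then show ?thesis using d'(3) by simp
qed

lemma ce_vert:
  assumes "n \<ge> 4"
  shows "ce n j \<bullet> vert n k = 1/2 + beta n j / 2 * cos (of_int (2 * int k - int j) * pi / real n)"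
proof -
  have "real (2*k) * pi / real n - real j * pi / real n = of_int (2 * int k - int j) * pi / real n"
    by (simp add: diff_divide_distrib[symmetric] algebra_simps)
  then show ?thesis unfolding vert_inner' leff_ce[OF assms] by (simp add: ce_def)
qed

lemma ce_effect:
  assumes "n = 2*p" "p \<ge> 2"
  shows "is_effect n (ce n j)" "is_effect n (unit_eff - ce n j)"
proof -
  have n4: "n \<ge> 4" using assms by simp
  have c: "0 < cos (pi / real n)" using cos_pin_pos[OF n4] .
  have b: "\<bar>beta n j / 2 * cos (of_int (2 * int k - int j) * pi / real n)\<bar> \<le> 1/2" for k
  proof (cases "even j")
    case True
    then show ?thesis by (simp add: beta_def abs_mult)
  next
    case False
    then have "odd (2 * int k - int j)" by simp
    then have "\<bar>cos (of_int (2 * int k - int j) * pi / real n)\<bar> \<le> cos (pi / real n)"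
      by (rule cos_odd_le[OF assms])
    then show ?thesis using False c by (simp add: beta_def abs_mult field_simps)
  qed
  show "is_effect n (ce n j)"
  proof (rule effect_of_verts)
    fix k show "0 \<le> ce n j \<bullet> vert n k \<and> ce n j \<bullet> vert n k \<le> 1"
      using b[of k] unfolding ce_vert[OF n4] abs_le_iff by linarith
  qed
  show "is_effect n (unit_eff - ce n j)"
  proof (rule effect_of_verts)
    fix k show "0 \<le> (unit_eff - ce n j) \<bullet> vert n k \<and> (unit_eff - ce n j) \<bullet> vert n k \<le> 1"
      using b[of k] unfolding inner_diff_left unit_inner ce_vert[OF n4] abs_le_iff by linarith
  qed
qed

lemma Phi_ce:
  assumes "n \<ge> 4"
  shows "Phi n (ce n j1) (ce n j2) a b =
     beta n j1 / 2 * (cos (real (2*a) * pi / real n - real j1 * pi / real n) + cos (real (2*b) * pi / real n - real j1 * pi / real n))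
   + beta n j2 / 2 * (cos (real (2*a) * pi / real n - real j2 * pi / real n) - cos (real (2*b) * pi / real n - real j2 * pi / real n))"
  unfolding Phi_def leff_ce[OF assms] by (simp add: algebra_simps)

lemma main_gen:
  assumes "n = 2*p" "p \<ge> 2" "HK n p K" "Phi n (ce n j1) (ce n j2) i i' = K"
  shows "Pbar_max n = 1/2 + K/4"
  using Pbar_max_eq[OF assms(1-3) ce_effect[OF assms(1,2)] ce_effect[OF assms(1,2)] assms(4)] .

lemma sq2: "sqrt 2 * (X * (sqrt 2 / 2)) = (X::real)"
proof -
  have "sqrt 2 * (X * (sqrt 2 / 2)) = X * (sqrt 2 * sqrt 2) / 2" by (simp only: mult_ac times_divide_eq_right)
  also have "\<dots> = X" by simp
  finally show ?thesis .
qed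

lemma cos_sin_le_sqrt2: "cos (x::real) + sin x \<le> sqrt 2"
proof -
  have e1: "(cos x + sin x)^2 = 1 + 2*(sin x)*(cos x)"
    using sin_cos_squared_add[of x] by (simp add: power2_eq_square algebra_simps)
  have e2: "(sin x - cos x)^2 = 1 - 2*(sin x)*(cos x)"
    using sin_cos_squared_add[of x] by (simp add: power2_eq_square algebra_simps)
  have "0 \<le> (sin x - cos x)^2" by simp
  then have "(cos x + sin x)^2 \<le> 2" using e1 e2 by linarith
  then show ?thesis by (simp add: real_le_rsqrt)
qed

lemma beta_le_sec: "n \<ge> 4 \<Longrightarrow> beta n j \<le> 1 / cos (pi / real n)"
  using cos_pin_pos[of n] cos_le_one[of "pi / real n"] by (simp add: beta_def field_simps)

lemma angle_nonneg_half:
  assumes "n = 2*p" "d \<le> p" "p > 0"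
  shows "0 \<le> cos (real d * pi / real n)" "0 \<le> sin (real d * pi / real n)"
proof -
  have a: "real d * pi / real n \<le> pi / 2" using assms by (simp add: field_simps)
  have b: "0 \<le> real d * pi / real n" by simp
  show "0 \<le> cos (real d * pi / real n)" using a b pi_gt_zero by (intro cos_ge_zero) linarith+
  show "0 \<le> sin (real d * pi / real n)" using a b pi_gt_zero by (intro sin_ge_zero) linarith+
qed

lemma HK_A:
  assumes "n = 4*m" "m \<ge> 1"
  shows "HK n (2*m) (sqrt 2 / cos (pi / real n))"
  unfolding HK_def
proof (intro allI impI)
  fix d \<sigma> :: nat assume d: "d \<le> 2*m" "even \<sigma> \<longleftrightarrow> even d"
  have n4: "n \<ge> 4" using assms by simp
  have bb: "beta n (\<sigma> + 2*m) = beta n \<sigma>" unfolding beta_def by simp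
  have cs: "0 \<le> cos (real d * pi / real n)" "0 \<le> sin (real d * pi / real n)"
    using angle_nonneg_half[of n "2*m" d] assms d by auto
  have "cos (real d * pi / real n) * beta n \<sigma> + sin (real d * pi / real n) * beta n (\<sigma> + 2*m)
      = beta n \<sigma> * (cos (real d * pi / real n) + sin (real d * pi / real n))" unfolding bb by (simp add: algebra_simps)
  also have "\<dots> \<le> (1 / cos (pi / real n)) * sqrt 2"
    using beta_le_sec[OF n4] beta_nonneg[OF n4] cs cos_sin_le_sqrt2 cos_pin_pos[OF n4]
    by (intro mult_mono) auto
  finally show "cos (real d * pi / real n) * beta n \<sigma> + sin (real d * pi / real n) * beta n (\<sigma> + 2*m) \<le> sqrt 2 / cos (pi / real n)"
    by simp
qed

lemma HK_B:
  assumes "n = 4*m" "m \<ge> 1" "even m"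
  shows "HK n (2*m) (sqrt 2)"
  unfolding HK_def
proof (intro allI impI)
  fix d \<sigma> :: nat assume d: "d \<le> 2*m" "even \<sigma> \<longleftrightarrow> even d"
  have n4: "n \<ge> 4" using assms by simp
  have c: "0 < cos (pi / real n)" by (rule cos_pin_pos[OF n4])
  have bb: "beta n (\<sigma> + 2*m) = beta n \<sigma>" unfolding beta_def by simp
  have "cos (real d * pi / real n) * beta n \<sigma> + sin (real d * pi / real n) * beta n (\<sigma> + 2*m)
      = beta n \<sigma> * (cos (real d * pi / real n) + sin (real d * pi / real n))" unfolding bb by (simp add: algebra_simps)
  also have "\<dots> \<le> sqrt 2"
  proof (cases "even d")
    case True
    then show ?thesis using d cos_sin_le_sqrt2 by (simp add: beta_def)
  next
    case False
    have pi4: "pi / 4 = real m * pi / real n" using assms by simp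
    have "cos (real d * pi / real n) + sin (real d * pi / real n)
        = sqrt 2 * cos (real d * pi / real n - pi / 4)"
    proof -
      have "cos (real d * pi / real n - pi / 4) = (cos (real d * pi / real n) + sin (real d * pi / real n)) * (sqrt 2 / 2)"
        by (simp add: cos_diff cos_45 sin_45 algebra_simps)
      then show ?thesis using sq2 by metis
    qed
    also have "real d * pi / real n - pi / 4 = of_int (int d - int m) * pi / real n"
      unfolding pi4 by (simp add: diff_divide_distrib[symmetric] algebra_simps)
    finally have e: "cos (real d * pi / real n) + sin (real d * pi / real n)
        = sqrt 2 * cos (of_int (int d - int m) * pi / real n)" .
    have "odd (int d - int m)" using False assms(3) by simp
    then have "\<bar>cos (of_int (int d - int m) * pi / real n)\<bar> \<le> cos (pi / real n)"
      by (intro cos_odd_le[of n "2*m"]) (use assms in auto)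
    then have "cos (of_int (int d - int m) * pi / real n) \<le> cos (pi / real n)" by linarith
    then have "(1 / cos (pi / real n)) * (cos (real d * pi / real n) + sin (real d * pi / real n)) \<le> sqrt 2"
      unfolding e using c by (simp add: field_simps)
    then show ?thesis using False d by (simp add: beta_def)
  qed
  finally show "cos (real d * pi / real n) * beta n \<sigma> + sin (real d * pi / real n) * beta n (\<sigma> + 2*m) \<le> sqrt 2" .
qed

lemma C_aux:
  assumes n: "n = 4*m+2"
  shows "sin (real m * pi / real n) = cos (real (m+1) * pi / real n)"
    "cos (real m * pi / real n) = sin (real (m+1) * pi / real n)"
proof -
  have "real (m+1) * pi / real n = pi/2 - real m * pi / real n" using n by (simp add: field_simps)
  then show "sin (real m * pi / real n) = cos (real (m+1) * pi / real n)"
    "cos (real m * pi / real n) = sin (real (m+1) * pi / real n)"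
    by (simp_all add: cos_diff sin_diff)
qed

lemma S1:
  assumes n: "n = 4*m+2" and "m \<ge> 1" and h: "h \<le> m"
  shows "sin (real h * pi / real n) \<le> cos (pi / real n) * cos (real h * pi / real n)"
proof -
  have n4: "n \<ge> 4" using assms by simp
  have c: "0 < cos (pi / real n)" by (rule cos_pin_pos[OF n4])
  let ?t = "pi / real n"
  have mh: "real m * pi / real n \<le> pi / 2" using n by (intro ang_le) simp_all
  have hm: "real h * pi / real n \<le> real m * pi / real n" using h by (simp add: divide_right_mono)
  have 0: "0 \<le> real h * pi / real n" by simp
  have s1: "sin (real h * pi / real n) \<le> sin (real m * pi / real n)"
    using mh hm 0 pi_gt_zero by (intro sin_monotone_2pi_le) linarith+
  have c1: "cos (real m * pi / real n) \<le> cos (real h * pi / real n)"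
    using mh hm 0 pi_gt_zero by (intro cos_monotone_0_pi_le) linarith+
  have "real (m+1) * pi / real n = real m * pi / real n + ?t" by (simp add: add_divide_distrib[symmetric] algebra_simps)
  then have E: "sin (real m * pi / real n) = cos (real m * pi / real n) * cos ?t - sin (real m * pi / real n) * sin ?t"
    using C_aux(1)[OF n] by (simp add: cos_add)
  have "real m * pi / real n \<le> pi" using ang_le[of n 1 m] n by simp
  then have P1: "0 \<le> sin (real m * pi / real n)" by (intro sin_ge_zero) simp_all
  have P2: "0 \<le> sin ?t" using n4 by (intro sin_ge_zero) (simp_all add: field_simps)
  have P: "0 \<le> sin (real m * pi / real n) * sin ?t" using P1 P2 by simp
  have "sin (real m * pi / real n) \<le> cos (real m * pi / real n) * cos ?t" using E P by linarith
  then have "sin (real m * pi / real n) \<le> cos ?t * cos (real m * pi / real n)" by (simp add: mult.commute)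
  also have "\<dots> \<le> cos ?t * cos (real h * pi / real n)" using c c1 by simp
  finally show ?thesis using s1 by linarith
qed

lemma S2:
  assumes n: "n = 4*m+2" and "m \<ge> 1" and h: "m+1 \<le> h" "h \<le> 2*m+1"
  shows "cos (pi / real n) * cos (real h * pi / real n) \<le> sin (real h * pi / real n)"
proof -
  have n4: "n \<ge> 4" using assms by simp
  have c: "0 < cos (pi / real n)" by (rule cos_pin_pos[OF n4])
  let ?t = "pi / real n"
  let ?a = "real (m+1) * pi / real n"
  have hp: "real h * pi / real n \<le> pi / 2" using n h by (intro ang_le) simp_all
  have hm: "?a \<le> real h * pi / real n" using h by (intro divide_right_mono) simp_all
  have 0: "0 \<le> ?a" by simp
  have s1: "sin ?a \<le> sin (real h * pi / real n)"
    using hp hm 0 pi_gt_zero by (intro sin_monotone_2pi_le) linarith+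
  have c1: "cos (real h * pi / real n) \<le> cos ?a"
    using hp hm 0 pi_gt_zero by (intro cos_monotone_0_pi_le) linarith+
  have "real m * pi / real n = ?a - ?t" by (simp add: diff_divide_distrib[symmetric] distrib_right)
  then have E: "sin ?a = cos ?a * cos ?t + sin ?a * sin ?t"
    using C_aux(2)[OF n] by (simp add: cos_diff)
  have api: "?a \<le> pi" using order_trans[OF hm order_trans[OF hp]] by simp
  have P1: "0 \<le> sin ?a" using api by (intro sin_ge_zero) simp_all
  have P2: "0 \<le> sin ?t" using n4 by (intro sin_ge_zero) (simp_all add: field_simps)
  have P: "0 \<le> sin ?a * sin ?t" using P1 P2 by simp
  have "cos ?a * cos ?t \<le> sin ?a" using E P by linarith
  then have "cos ?t * cos ?a \<le> sin ?a" by (simp add: mult.commute)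
  moreover have "cos ?t * cos (real h * pi / real n) \<le> cos ?t * cos ?a" using c c1 by simp
  ultimately show ?thesis using s1 by linarith
qed

lemma coreC:
  assumes n: "n = 4*m+2" and m1: "m \<ge> 1" and q: "odd q" "m \<le> q" "q \<le> m+1"
    and k: "odd k" "k \<le> 2*m+1"
  shows "cos (real k * pi / real n) + cos (pi / real n) * sin (real k * pi / real n)
       \<le> cos (real q * pi / real n) + cos (pi / real n) * sin (real q * pi / real n)"
proof -
  let ?c = "cos (pi / real n)"
  obtain h where h: "q + k = 2*h" using q(1) k(1) by (metis odd_add evenE)
  define j where "j = (int q - int k) div 2"
  have j: "int q - int k = 2*j" unfolding j_def using q(1) k(1) by simp
  define x where "x = real h * pi / real n"
  define y where "y = of_int j * pi / real n"
  have rq: "real q = real h + of_int j" "real k = real h - of_int j"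
    using h j by linarith+
  have xq: "real q * pi / real n = x + y" "real k * pi / real n = x - y"
    unfolding x_def y_def rq by (simp_all add: add_divide_distrib diff_divide_distrib algebra_simps)
  have D: "(cos (real q * pi / real n) + ?c * sin (real q * pi / real n))
        - (cos (real k * pi / real n) + ?c * sin (real k * pi / real n))
        = 2 * sin y * (?c * cos x - sin x)"
    using lam_diff[of 1 ?c x y] unfolding xq lam_def by (simp add: cos_add sin_add)
  have npos: "real n > 0" using n by simp
  have "0 \<le> 2 * sin y * (?c * cos x - sin x)"
  proof (cases "k < q")
    case True
    then have j1: "j \<ge> 1" using j by linarith
    have "2 * j \<le> int m + 1" using j q k by linarith
    then have "of_int j \<le> real m" using m1 by linarith
    then have "of_int j * pi / real n < pi" using n by (intro ang_less) simp_all
    moreover have "0 < of_int j * pi / real n" using j1 npos by simp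
    ultimately have sy: "0 < sin y" unfolding y_def by (simp add: sin_gt_zero)
    have "h \<le> m" using h True q by linarith
    then have "sin x \<le> ?c * cos x" unfolding x_def by (rule S1[OF n m1])
    then show ?thesis using sy by simp
  next
    case False
    show ?thesis
    proof (cases "k = q")
      case True then show ?thesis using j y_def by simp
    next
      case False2: False
      then have kq: "k > q" using False by simp
      then have j1: "j \<le> -1" using j by linarith
      have "- 2 * j \<le> 2 * int m + 1" using j q k by linarith
      then have "- of_int j \<le> real m + 1" by linarith
      then have "of_int (-j) * pi / real n < pi" using n by (intro ang_less) simp_all
      moreover have "0 < of_int (-j) * pi / real n" using j1 npos by (intro divide_pos_pos mult_pos_pos) simp_all
      ultimately have "0 < sin (of_int (-j) * pi / real n)" by (intro sin_gt_zero)
      then have sy: "sin y < 0" unfolding y_def by simp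
      have "m+1 \<le> h" "h \<le> 2*m+1" using h kq q k by linarith+
      then have "?c * cos x \<le> sin x" unfolding x_def by (rule S2[OF n m1])
      then show ?thesis using sy by (simp add: mult_nonpos_nonpos)
    qed
  qed
  then show ?thesis using D by linarith
qed

lemma coreC':
  assumes n: "n = 4*m+2" and m1: "m \<ge> 1" and q: "odd q" "m \<le> q" "q \<le> m+1"
    and k: "odd k" "k \<le> 2*m+1"
  shows "cos (real k * pi / real n) / cos (pi / real n) + sin (real k * pi / real n)
       \<le> cos (real q * pi / real n) / cos (pi / real n) + sin (real q * pi / real n)"
proof -
  have n4: "n \<ge> 4" using assms by simp
  have c: "0 < cos (pi / real n)" by (rule cos_pin_pos[OF n4])
  have "(cos (real k * pi / real n) + cos (pi / real n) * sin (real k * pi / real n)) / cos (pi / real n)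
       \<le> (cos (real q * pi / real n) + cos (pi / real n) * sin (real q * pi / real n)) / cos (pi / real n)"
    using coreC[OF assms] c by (simp add: divide_right_mono)
  then show ?thesis using c by (simp add: add_divide_distrib)
qed

lemma HK_C:
  assumes n: "n = 4*m+2" and m1: "m \<ge> 1" and q: "odd q" "m \<le> q" "q \<le> m+1"
  shows "HK n (2*m+1) (cos (real q * pi / real n) / cos (pi / real n) + sin (real q * pi / real n))"
  unfolding HK_def
proof (intro allI impI)
  fix d \<sigma> :: nat assume d: "d \<le> 2*m+1" "even \<sigma> \<longleftrightarrow> even d"
  show "cos (real d * pi / real n) * beta n \<sigma> + sin (real d * pi / real n) * beta n (\<sigma> + (2*m+1))
     \<le> cos (real q * pi / real n) / cos (pi / real n) + sin (real q * pi / real n)"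
  proof (cases "even d")
    case False
    then have "beta n \<sigma> = 1 / cos (pi / real n)" "beta n (\<sigma> + (2*m+1)) = 1" using d by (simp_all add: beta_def)
    then show ?thesis using coreC'[OF assms False d(1)] by simp
  next
    case True
    then have b: "beta n \<sigma> = 1" "beta n (\<sigma> + (2*m+1)) = 1 / cos (pi / real n)" using d by (simp_all add: beta_def)
    define k where "k = 2*m+1 - d"
    have k: "odd k" "k \<le> 2*m+1" using True d unfolding k_def by auto
    have "real d * pi / real n = pi/2 - real k * pi / real n"
      using n d unfolding k_def by (simp add: field_simps of_nat_diff)
    then have "cos (real d * pi / real n) = sin (real k * pi / real n)"
      "sin (real d * pi / real n) = cos (real k * pi / real n)" by (simp_all add: cos_diff sin_diff)
    then show ?thesis using coreC'[OF assms k] b by simp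
  qed
qed

lemma case_A_B:
  assumes n: "n = 4*m" and m1: "m \<ge> 1"
  shows "Phi n (ce n m) (ce n (3*m)) m 0 = sqrt 2 * beta n m"
proof -
  have n4: "n \<ge> 4" using assms by simp
  have pi4: "real m * pi / real n = pi / 4" using n m1 by (simp add: field_simps)
  have a1: "real (2*m) * pi / real n - real m * pi / real n = pi / 4" using n m1 by (simp add: field_simps)
  have a2: "real (2*0) * pi / real n - real m * pi / real n = - (pi / 4)" using pi4 by simp
  have a3: "real (2*m) * pi / real n - real (3*m) * pi / real n = - (pi / 4)"
  proof -
    have "real (2*m) * pi / real n = 2 * (real m * pi / real n)" "real (3*m) * pi / real n = 3 * (real m * pi / real n)"
      by (simp_all add: field_simps)
    then show ?thesis using pi4 by linarith
  qed
  have a4: "real (2*0) * pi / real n - real (3*m) * pi / real n = - (pi - pi / 4)"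
  proof -
    have "real (3*m) * pi / real n = 3 * (real m * pi / real n)" by (simp_all add: field_simps)
    then show ?thesis using pi4 by simp
  qed
  have bb: "beta n (3*m) = beta n m" by (simp add: beta_def)
  have c34: "cos (pi - pi/4) = - cos (pi/4)" by (rule cos_pi_minus)
  show ?thesis unfolding Phi_ce[OF n4] a1 a2 a3 a4 bb cos_minus c34 cos_45
    by (simp add: algebra_simps)
qed

lemma case_C:
  assumes n: "n = 4*m+2" and m1: "m \<ge> 1" and q: "odd q"
  shows "Phi n (ce n q) (ce n (q + (2*m+1))) q 0
     = cos (real q * pi / real n) / cos (pi / real n) + sin (real q * pi / real n)"
proof -
  have n4: "n \<ge> 4" using assms by simp
  have ph: "real (2*m+1) * pi / real n = pi / 2" using n by (simp add: field_simps)
  have a1: "real (2*q) * pi / real n - real q * pi / real n = real q * pi / real n" by (simp add: field_simps)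
  have a2: "real (2*0) * pi / real n - real q * pi / real n = - (real q * pi / real n)" by simp
  have a3: "real (2*q) * pi / real n - real (q + (2*m+1)) * pi / real n = real q * pi / real n - pi / 2"
  proof -
    have "real (2*q) * pi / real n - real (q + (2*m+1)) * pi / real n = real q * pi / real n - real (2*m+1) * pi / real n"
      using n by (simp add: field_simps)
    then show ?thesis using ph by simp
  qed
  have a4: "real (2*0) * pi / real n - real (q + (2*m+1)) * pi / real n = - (real q * pi / real n + pi / 2)"
  proof -
    have "real (q + (2*m+1)) * pi / real n = real q * pi / real n + real (2*m+1) * pi / real n"
      by (simp add: add_divide_distrib[symmetric] distrib_right)
    then show ?thesis using ph by simp
  qed
  have bb: "beta n q = 1 / cos (pi / real n)" "beta n (q + (2*m+1)) = 1" using q by (simp_all add: beta_def)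
  show ?thesis unfolding Phi_ce[OF n4] a1 a2 a3 a4 bb
    by (simp add: cos_diff cos_add)
qed

lemma r2: "1 / sqrt 2 = sqrt 2 / 2"
  by (simp add: field_simps)

theorem mainTheorem15:
  fixes n m :: nat
  assumes "even n" and "n \<ge> 4" and "m \<ge> 1"
  shows "(n = 4 * m \<and> odd m \<longrightarrow>
            Pbar_max n = (1/2) * (1 + sec (pi / real n) / sqrt 2))
       \<and> (n = 4 * m \<and> even m \<longrightarrow>
            Pbar_max n = (1/2) * (1 + 1 / sqrt 2))
       \<and> (n = 4 * m + 2 \<and> odd m \<longrightarrow>
            Pbar_max n = (1/4) * (2 + sec (pi / real n) * cos (real m * pi / real n)
                                    + sin (real m * pi / real n)))
       \<and> (n = 4 * m + 2 \<and> even m \<longrightarrow>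
            Pbar_max n = (1/4) * (2 + cos (real m * pi / real n)
                                    + sec (pi / real n) * sin (real m * pi / real n)))"
proof (intro conjI impI; elim conjE)
  assume n: "n = 4*m" and mo: "odd m"
  have n2: "n = 2*(2*m)" "2*m \<ge> 2" using n assms by auto
  have "Pbar_max n = 1/2 + (sqrt 2 / cos (pi / real n)) / 4"
    by (rule main_gen[OF n2 HK_A[OF n assms(3)], of m "3*m" m 0])
       (use case_A_B[OF n assms(3)] mo in \<open>simp add: beta_def\<close>)
  moreover have "(sqrt 2 / c) / 4 = (1/2) * ((1/c) / sqrt 2)" for c
  proof -
    have "(1/2) * ((1/c) / sqrt 2) = (1/2) * (1 / sqrt 2) / c" by simp
    also have "\<dots> = (sqrt 2 / c) / 4" unfolding r2 by simp
    finally show ?thesis by simp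
  qed
  moreover have "(1/2) * (1 + (1/c)/sqrt 2) = 1/2 + (1/2)*((1/c)/sqrt 2)" for c :: real
    by (simp only: distrib_left mult_1_right)
  ultimately show "Pbar_max n = (1/2) * (1 + sec (pi / real n) / sqrt 2)"
    unfolding sec_def by metis
next
  assume n: "n = 4*m" and me: "even m"
  have n2: "n = 2*(2*m)" "2*m \<ge> 2" using n assms by auto
  have "Pbar_max n = 1/2 + sqrt 2 / 4"
    by (rule main_gen[OF n2 HK_B[OF n assms(3) me], of m "3*m" m 0])
       (use case_A_B[OF n assms(3)] me in \<open>simp add: beta_def\<close>)
  moreover have "sqrt 2 / 4 = (1/2) * (1 / sqrt 2)" unfolding r2 by simp
  ultimately show "Pbar_max n = (1/2) * (1 + 1 / sqrt 2)" by (simp add: algebra_simps)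
next
  assume n: "n = 4*m+2" and mo: "odd m"
  have n2: "n = 2*(2*m+1)" "2*m+1 \<ge> 2" using n assms by auto
  have "Pbar_max n = 1/2 + (cos (real m * pi / real n) / cos (pi / real n) + sin (real m * pi / real n)) / 4"
    by (rule main_gen[OF n2 HK_C[OF n assms(3) mo], of m "m + (2*m+1)" m 0])
       (use case_C[OF n assms(3) mo] in simp_all)
  then show "Pbar_max n = (1/4) * (2 + sec (pi / real n) * cos (real m * pi / real n) + sin (real m * pi / real n))"
    unfolding sec_def by (simp add: field_simps)
next
  assume n: "n = 4*m+2" and me: "even m"
  have qo: "odd (m+1)" using me by simp
  have n2: "n = 2*(2*m+1)" "2*m+1 \<ge> 2" using n assms by auto
  have "Pbar_max n = 1/2 + (cos (real (m+1) * pi / real n) / cos (pi / real n) + sin (real (m+1) * pi / real n)) / 4"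
    by (rule main_gen[OF n2 HK_C[OF n assms(3) qo], of "m+1" "m+1 + (2*m+1)" "m+1" 0])
       (use case_C[OF n assms(3) qo] in simp_all)
  then show "Pbar_max n = (1/4) * (2 + cos (real m * pi / real n) + sec (pi / real n) * sin (real m * pi / real n))"
    unfolding sec_def C_aux[OF n] by (simp add: field_simps)
qed

end
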